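(* Let $\mathcal{X}$ be a finite set and $\underline{Q}$ a lower transition rate operator on $\mathcal{L}(\mathcal{X})$. Then for any $t>0$: $\underline{Q}$ is ergodic if and only if $\underline{T}_t$ is ergodic.
   Context: $\mathcal{L}(\mathcal{X})$ is the set of real-valued functions on $\mathcal{X}$ with pointwise operations and order, real constants identified with constant functions, $\mathbb{I}_y$ the indicator of $\{y\}$. A lower transition rate operator is a map $\underline{Q}\colon\mathcal{L}(\mathcal{X})\to\mathcal{L}(\mathcal{X})$ such that for all $f,g$, $\lambda\ge0$, $\mu\in\mathbb{R}$, $x,y\in\mathcal{X}$: $\underline{Q}(\mu)=0$; $\underline{Q}(f+g)\ge\underline{Q}f+\underline{Q}g$; $\underline{Q}(\lambda f)=\lambda\underline{Q}f$; $x\ne y\Rightarrow\underline{Q}(\mathbb{I}_y)(x)\ge0$. For each $f$, $t\mapsto\underline{T}_tf$ is the unique solution on $[0,\infty)$ of $\frac{d}{dt}\underline{T}_tf=\underline{Q}\,\underline{T}_tf$ with $\underline{T}_0f=f$ (existence and uniqueness are known); $\underline{T}_t$ denotes the operator $f\mapsto\underline{T}_tf$. $\underline{Q}$ is ergodic if for all $f$, $\lim_{t\to\infty}\underline{T}_tf$ exists and is a constant function. A map $\underline{T}\colon\mathcal{L}(\mathcal{X})\to\mathcal{L}(\mathcal{X})$ (here $\underline{T}=\underline{T}_t$) is ergodic if for all $f$, $\lim_{n\to\infty}\underline{T}^nf$ exists and is a constant function, where $\underline{T}^n$ is the $n$-fold composition. *)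

theory Defs
  imports "HOL-Analysis.Analysis"
begin

text \<open>Functions on a finite state space 'x are represented as 'x \<Rightarrow> real,
with pointwise operations, pointwise order and the product topology
(which for finite 'x is the usual topology of pointwise convergence).\<close>

definition lower_rate_op :: "(('x \<Rightarrow> real) \<Rightarrow> ('x \<Rightarrow> real)) \<Rightarrow> bool" where
  "lower_rate_op Q \<longleftrightarrow>
     (\<forall>\<mu>::real. Q (\<lambda>_. \<mu>) = (\<lambda>_. 0)) \<and>
     (\<forall>f g x. Q (\<lambda>z. f z + g z) x \<ge> Q f x + Q g x) \<and>
     (\<forall>(l::real) f. l \<ge> 0 \<longrightarrow> Q (\<lambda>x. l * f x) = (\<lambda>x. l * Q f x)) \<and>
     (\<forall>x y. x \<noteq> y \<longrightarrow> Q (\<lambda>z. if z = y then 1 else 0) x \<ge> 0)"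

definition is_lower_sol :: "(('x \<Rightarrow> real) \<Rightarrow> ('x \<Rightarrow> real)) \<Rightarrow> ('x \<Rightarrow> real) \<Rightarrow> (real \<Rightarrow> 'x \<Rightarrow> real) \<Rightarrow> bool" where
  "is_lower_sol Q f g \<longleftrightarrow> g 0 = f \<and>
     (\<forall>t\<ge>0. \<forall>x. ((\<lambda>s. g s x) has_real_derivative Q (g t) x) (at t within {0..}))"

text \<open>The lower transition operator T_t: value at time t of the (unique on [0,\<infinity>)) solution.\<close>
definition lower_T :: "(('x \<Rightarrow> real) \<Rightarrow> ('x \<Rightarrow> real)) \<Rightarrow> real \<Rightarrow> ('x \<Rightarrow> real) \<Rightarrow> ('x \<Rightarrow> real)" where
  "lower_T Q t f = (SOME g. is_lower_sol Q f g) t"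

definition ergodic_rate :: "(('x \<Rightarrow> real) \<Rightarrow> ('x \<Rightarrow> real)) \<Rightarrow> bool" where
  "ergodic_rate Q \<longleftrightarrow> (\<forall>f. \<exists>c::real. ((\<lambda>t. lower_T Q t f) \<longlongrightarrow> (\<lambda>_. c)) at_top)"

definition ergodic_op :: "(('x \<Rightarrow> real) \<Rightarrow> ('x \<Rightarrow> real)) \<Rightarrow> bool" where
  "ergodic_op T \<longleftrightarrow> (\<forall>f. \<exists>c::real. ((\<lambda>n. (T ^^ n) f) \<longlongrightarrow> (\<lambda>_. c)) sequentially)"

end

theory Submission
  imports Defs
begin

lemma tendsto_fun_iff:
  "((f :: 'b \<Rightarrow> 'x \<Rightarrow> real) \<longlongrightarrow> l) F \<longleftrightarrow> (\<forall>i. ((\<lambda>c. f c i) \<longlongrightarrow> l i) F)"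
proof -
  have "(f \<longlongrightarrow> l) F \<longleftrightarrow> limitin (product_topology (\<lambda>i. euclidean) UNIV) f l F"
    by (simp add: euclidean_product_topology limitin_canonical_iff)
  also have "\<dots> \<longleftrightarrow> (\<forall>i. ((\<lambda>c. f c i) \<longlongrightarrow> l i) F)"
    by (simp add: limitin_componentwise limitin_canonical_iff)
  finally show ?thesis .
qed

definition ind :: "'x \<Rightarrow> 'x \<Rightarrow> real" where "ind y = (\<lambda>z. if z = y then 1 else 0)"
definition N1 :: "('x::finite \<Rightarrow> real) \<Rightarrow> real" where "N1 h = (\<Sum>y\<in>UNIV. \<bar>h y\<bar>)"

locale lrate =
  fixes Q :: "('x::finite \<Rightarrow> real) \<Rightarrow> ('x \<Rightarrow> real)"
  assumes lr: "lower_rate_op Q"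
begin

lemma Qconst: "Q (\<lambda>_. c) = (\<lambda>_. 0)"
  using lr unfolding lower_rate_op_def by blast

lemma Qsup: "Q (\<lambda>z. f z + g z) x \<ge> Q f x + Q g x"
  using lr unfolding lower_rate_op_def by blast

lemma Qhom: "l \<ge> 0 \<Longrightarrow> Q (\<lambda>x. l * f x) = (\<lambda>x. l * Q f x)"
  using lr unfolding lower_rate_op_def by blast

lemma Qsum: "finite A \<Longrightarrow> Q (\<lambda>z. \<Sum>y\<in>A. \<phi> y z) x \<ge> (\<Sum>y\<in>A. Q (\<phi> y) x)"
proof (induction A rule: finite_induct)
  case empty
  then show ?case using Qconst[of 0] by (simp add: fun_eq_iff)
next
  case (insert a A)
  have "Q (\<lambda>z. \<Sum>y\<in>insert a A. \<phi> y z) x = Q (\<lambda>z. \<phi> a z + (\<Sum>y\<in>A. \<phi> y z)) x"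
    using insert by simp
  also have "\<dots> \<ge> Q (\<phi> a) x + Q (\<lambda>z. \<Sum>y\<in>A. \<phi> y z) x"
    by (rule Qsup)
  finally have "Q (\<lambda>z. \<Sum>y\<in>insert a A. \<phi> y z) x \<ge> Q (\<phi> a) x + (\<Sum>y\<in>A. Q (\<phi> y) x)"
    using insert.IH by linarith
  then show ?case using insert.hyps by simp
qed

definition B :: real where
  "B = (\<Sum>x\<in>UNIV. \<Sum>y\<in>UNIV. \<bar>Q (ind y) x\<bar> + \<bar>Q (\<lambda>z. - ind y z) x\<bar>)"

lemma B_ge: "\<bar>Q (ind y) x\<bar> + \<bar>Q (\<lambda>z. - ind y z) x\<bar> \<le> B"
proof -
  have "\<bar>Q (ind y) x\<bar> + \<bar>Q (\<lambda>z. - ind y z) x\<bar> \<le> (\<Sum>y\<in>UNIV. \<bar>Q (ind y) x\<bar> + \<bar>Q (\<lambda>z. - ind y z) x\<bar>)"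
    by (rule member_le_sum) auto
  also have "\<dots> \<le> B" unfolding B_def
    by (rule member_le_sum[of _ UNIV "\<lambda>x. \<Sum>y\<in>UNIV. \<bar>Q (ind y) x\<bar> + \<bar>Q (\<lambda>z. - ind y z) x\<bar>"])
      (auto intro: sum_nonneg)
  finally show ?thesis .
qed

lemma B_nonneg: "B \<ge> 0"
  unfolding B_def by (intro sum_nonneg) auto

lemma Qscal: "Q (\<lambda>z. c * ind y z) x \<ge> - \<bar>c\<bar> * B"
proof (cases "c \<ge> 0")
  case True
  then have e: "Q (\<lambda>z. c * ind y z) x = c * Q (ind y) x" using Qhom[of c "ind y"] by simp
  have "- B \<le> Q (ind y) x" using B_ge[of y x] by linarith
  from mult_left_mono[OF this True] show ?thesis using e True by simp
next
  case False
  have "(\<lambda>z. c * ind y z) = (\<lambda>z. (-c) * (- ind y z))" by auto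
  then have e: "Q (\<lambda>z. c * ind y z) x = (-c) * Q (\<lambda>z. - ind y z) x" using Qhom[of "-c" "\<lambda>z. - ind y z"] False by simp
  have "- B \<le> Q (\<lambda>z. - ind y z) x" using B_ge[of y x] by linarith
  from mult_left_mono[OF this, of "-c"] show ?thesis using e False by simp
qed

lemma Qlow: "Q h x \<ge> - B * N1 h"
proof -
  have "(\<Sum>y\<in>UNIV. h y * ind y z) = h z" for z
  proof -
    have "(\<Sum>y\<in>UNIV. h y * ind y z) = (\<Sum>y\<in>UNIV. if y = z then h y else 0)"
      by (rule sum.cong) (auto simp: ind_def)
    then show ?thesis by simp
  qed
  then have "h = (\<lambda>z. \<Sum>y\<in>UNIV. h y * ind y z)" by auto
  then have "Q h x = Q (\<lambda>z. \<Sum>y\<in>UNIV. h y * ind y z) x" by simp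
  also have "\<dots> \<ge> (\<Sum>y\<in>UNIV. Q (\<lambda>z. h y * ind y z) x)" by (rule Qsum) simp
  also have "(\<Sum>y\<in>UNIV. Q (\<lambda>z. h y * ind y z) x) \<ge> (\<Sum>y\<in>UNIV. - \<bar>h y\<bar> * B)"
    by (rule sum_mono) (rule Qscal)
  finally show ?thesis by (simp add: N1_def sum_distrib_left sum_negf mult.commute)
qed

lemma N1_minus: "N1 (\<lambda>z. - h z) = N1 h" by (simp add: N1_def)

lemma Qup: "Q h x \<le> B * N1 h"
proof -
  have "Q (\<lambda>z. h z + - h z) x \<ge> Q h x + Q (\<lambda>z. - h z) x" by (rule Qsup)
  then have "Q h x + Q (\<lambda>z. - h z) x \<le> 0" using Qconst[of 0] by simp
  with Qlow[of "\<lambda>z. - h z" x] show ?thesis by (simp add: N1_minus)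
qed

lemma Qabs: "\<bar>Q h x\<bar> \<le> B * N1 h"
  using Qlow[of h x] Qup[of h x] by linarith

lemma Qlip: "\<bar>Q f x - Q g x\<bar> \<le> B * N1 (\<lambda>z. f z - g z)"
proof -
  have 1: "Q f x \<ge> Q g x + Q (\<lambda>z. f z - g z) x"
    using Qsup[where f=g and g="\<lambda>z. f z - g z" and x=x] by simp
  have 2: "Q g x \<ge> Q f x + Q (\<lambda>z. g z - f z) x"
    using Qsup[where f=f and g="\<lambda>z. g z - f z" and x=x] by simp
  have "N1 (\<lambda>z. g z - f z) = N1 (\<lambda>z. f z - g z)" unfolding N1_def by (simp add: abs_minus_commute)
  then have 3: "- B * N1 (\<lambda>z. f z - g z) \<le> Q (\<lambda>z. g z - f z) x"
    using Qlow[of "\<lambda>z. g z - f z" x] by simp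
  show ?thesis using 1 2 3 Qlow[of "\<lambda>z. f z - g z" x]
    unfolding abs_le_iff by linarith
qed

end

lemma N1_sq: "(N1 (h::'x::finite \<Rightarrow> real))^2 \<le> real CARD('x) * (\<Sum>x\<in>UNIV. (h x)^2)"
proof -
  have "(N1 h)^2 = (\<Sum>x\<in>UNIV. \<Sum>y\<in>UNIV. \<bar>h x\<bar> * \<bar>h y\<bar>)"
    unfolding N1_def power2_eq_square by (simp add: sum_product)
  also have "\<dots> \<le> (\<Sum>x\<in>UNIV. \<Sum>y\<in>UNIV. ((h x)^2 + (h y)^2) / 2)"
  proof (intro sum_mono)
    fix x y
    have "0 \<le> (\<bar>h x\<bar> - \<bar>h y\<bar>)^2" by simp
    then show "\<bar>h x\<bar> * \<bar>h y\<bar> \<le> ((h x)^2 + (h y)^2) / 2"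
      by (simp add: power2_eq_square algebra_simps)
  qed
  also have "\<dots> = real CARD('x) * (\<Sum>x\<in>UNIV. (h x)^2)"
    by (simp add: sum.distrib sum_divide_distrib[symmetric] sum_distrib_left[symmetric]
        sum.swap[of "\<lambda>x y. (h y)^2"] algebra_simps)
  finally show ?thesis .
qed

context lrate begin

definition K :: real where "K = 2 * B * real CARD('x)"

lemma K_nonneg: "K \<ge> 0" unfolding K_def using B_nonneg by simp

lemma at_pos: "s > 0 \<Longrightarrow> at s within {0::real..} = at s"
  by (rule at_within_nhd[where S="{0<..}"]) auto

lemma gron:
  assumes s1: "is_lower_sol Q f1 g1" and s2: "is_lower_sol Q f2 g2" and s: "s \<ge> 0"
  shows "(\<Sum>x\<in>UNIV. (g1 s x - g2 s x)^2) \<le> exp (K * s) * (\<Sum>x\<in>UNIV. (f1 x - f2 x)^2)"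
proof -
  define V where "V r = (\<Sum>x\<in>UNIV. (g1 r x - g2 r x)^2)" for r
  define V' where "V' r = (\<Sum>x\<in>UNIV. 2 * (g1 r x - g2 r x) * (Q (g1 r) x - Q (g2 r) x))" for r
  define W where "W r = exp (- (K * r)) * V r" for r
  have d1: "\<And>r x. r \<ge> 0 \<Longrightarrow> ((\<lambda>s. g1 s x) has_real_derivative Q (g1 r) x) (at r within {0..})"
    using s1 unfolding is_lower_sol_def by blast
  have d2: "\<And>r x. r \<ge> 0 \<Longrightarrow> ((\<lambda>s. g2 s x) has_real_derivative Q (g2 r) x) (at r within {0..})"
    using s2 unfolding is_lower_sol_def by blast
  have dV: "(V has_real_derivative V' r) (at r within {0..})" if "r \<ge> 0" for r
    unfolding V_def V'_def
    by (auto intro!: derivative_eq_intros d1 d2 that sum.cong simp: power2_eq_square algebra_simps)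
  have dW: "(W has_real_derivative (exp (- (K * r)) * (V' r - K * V r))) (at r within {0..})" if "r \<ge> 0" for r
    unfolding W_def
    by (rule derivative_eq_intros dV that refl | simp add: algebra_simps)+
  have V'le: "V' r \<le> K * V r" for r
  proof -
    define h where "h x = g1 r x - g2 r x" for x
    have "V' r \<le> (\<Sum>x\<in>UNIV. 2 * \<bar>h x\<bar> * (B * N1 h))"
      unfolding V'_def
    proof (rule sum_mono)
      fix x
      have hq: "\<bar>Q (g1 r) x - Q (g2 r) x\<bar> \<le> B * N1 h" unfolding h_def by (rule Qlip)
      have "2 * h x * (Q (g1 r) x - Q (g2 r) x) \<le> 2 * \<bar>h x\<bar> * (B * N1 h)"
      proof -
        have "h x * (Q (g1 r) x - Q (g2 r) x) \<le> \<bar>h x * (Q (g1 r) x - Q (g2 r) x)\<bar>" by (rule abs_ge_self)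
        also have "\<dots> = \<bar>h x\<bar> * \<bar>Q (g1 r) x - Q (g2 r) x\<bar>" by (rule abs_mult)
        also have "\<dots> \<le> \<bar>h x\<bar> * (B * N1 h)" using hq by (intro mult_left_mono) auto
        finally show ?thesis by simp
      qed
      then show "2 * (g1 r x - g2 r x) * (Q (g1 r) x - Q (g2 r) x) \<le> 2 * \<bar>h x\<bar> * (B * N1 h)"
        by (simp add: h_def)
    qed
    also have "\<dots> = 2 * B * (N1 h)^2"
      by (simp add: N1_def power2_eq_square sum_distrib_left sum_distrib_right algebra_simps)
    also have "\<dots> \<le> 2 * B * (real CARD('x) * (\<Sum>x\<in>UNIV. (h x)^2))"
      using N1_sq[of h] B_nonneg by (intro mult_left_mono) auto
    finally show ?thesis by (simp add: K_def V_def h_def algebra_simps)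
  qed
  have cW: "continuous_on {0..s} W"
    by (rule DERIV_continuous_on[where D="\<lambda>r. exp (- (K * r)) * (V' r - K * V r)"])
       (auto intro: has_field_derivative_subset[OF dW])
  have "W s \<le> W 0"
  proof (rule DERIV_nonpos_imp_decreasing_open[OF s _ cW])
    fix r :: real assume r: "0 < r" "r < s"
    have "(W has_real_derivative (exp (- (K * r)) * (V' r - K * V r))) (at r)"
      using dW[of r] r at_pos[of r] by simp
    moreover have "exp (- (K * r)) * (V' r - K * V r) \<le> 0"
      using V'le[of r] by (simp add: mult_nonneg_nonpos)
    ultimately show "\<exists>y. (W has_real_derivative y) (at r) \<and> y \<le> 0" by blast
  qed
  then have "exp (- (K * s)) * V s \<le> V 0" by (simp add: W_def)
  then have "V s \<le> exp (K * s) * V 0"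
    by (simp add: exp_minus field_simps)
  moreover have "V 0 = (\<Sum>x\<in>UNIV. (f1 x - f2 x)^2)"
    using s1 s2 unfolding V_def is_lower_sol_def by simp
  ultimately show ?thesis by (simp add: V_def)
qed

lemma gron_pt:
  assumes s1: "is_lower_sol Q f1 g1" and s2: "is_lower_sol Q f2 g2" and s: "s \<ge> 0"
  shows "\<bar>g1 s x - g2 s x\<bar> \<le> sqrt (exp (K * s) * (\<Sum>x\<in>UNIV. (f1 x - f2 x)^2))"
proof -
  have "(g1 s x - g2 s x)^2 \<le> (\<Sum>x\<in>UNIV. (g1 s x - g2 s x)^2)"
    by (rule member_le_sum) auto
  also note gron[OF assms]
  finally show ?thesis by (metis real_le_rsqrt power2_abs)
qed

lemma uniq:
  assumes s1: "is_lower_sol Q f g1" and s2: "is_lower_sol Q f g2" and s: "s \<ge> 0"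
  shows "g1 s = g2 s"
proof
  fix x
  show "g1 s x = g2 s x" using gron_pt[OF s1 s2 s, of x] by simp
qed

end

lemma poly_int:
  assumes "(s::real) \<ge> 0"
  shows "((\<lambda>r. c * r^m) has_integral (c * s^(Suc m) / Suc m)) {0..s}"
proof -
  have "((\<lambda>r. c * r^m) has_integral ((\<lambda>r. c * r^(Suc m) / Suc m) s - (\<lambda>r. c * r^(Suc m) / Suc m) 0)) {0..s}"
  proof (rule fundamental_theorem_of_calculus[OF assms])
    fix x :: real assume "x \<in> {0..s}"
    have "((\<lambda>r. c * r^(Suc m) / Suc m) has_real_derivative c * x^m) (at x within {0..s})"
      by (rule derivative_eq_intros refl | simp)+
    then show "((\<lambda>r. c * r^(Suc m) / Suc m) has_vector_derivative c * x^m) (at x within {0..s})"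
      by (simp add: has_real_derivative_iff_has_vector_derivative)
  qed
  then show ?thesis by simp
qed

lemma cont_within_transfer:
  assumes "\<And>T. T \<ge> 0 \<Longrightarrow> continuous_on {0..T} h"
  shows "continuous_on {0::real..} h"
  unfolding continuous_on_eq_continuous_within
proof
  fix a :: real assume a: "a \<in> {0..}"
  have "continuous (at a within {0..a+1}) h"
    using assms[of "a+1"] a by (simp add: continuous_on_eq_continuous_within)
  moreover have "at a within {0..a+1} = at a within {0..}"
    by (rule at_within_nhd[where S="{..<a+1}"]) auto
  ultimately show "continuous (at a within {0..}) h" by simp
qed

lemma ftc0:
  assumes "continuous_on {0::real..} F" "a \<ge> 0"
  shows "((\<lambda>s. integral {0..s} F) has_real_derivative F a) (at a within {0..})"
proof -
  have "((\<lambda>s. integral {0..s} F) has_real_derivative F a) (at a within {0..a+1})"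
    by (rule integral_has_real_derivative) (use assms in \<open>auto intro: continuous_on_subset\<close>)
  moreover have "at a within {0..a+1} = at a within {0..}"
    by (rule at_within_nhd[where S="{..<a+1}"]) auto
  ultimately show ?thesis by simp
qed

context lrate begin

lemma Qcont:
  assumes "\<And>y. continuous_on S (\<lambda>r. g r y)"
  shows "continuous_on S (\<lambda>r. Q (g r) x)"
  unfolding continuous_on_def
proof
  fix a assume a: "a \<in> S"
  have "((\<lambda>r. B * N1 (\<lambda>z. g r z - g a z)) \<longlongrightarrow> B * N1 (\<lambda>z. g a z - g a z)) (at a within S)"
    unfolding N1_def
    by (intro tendsto_intros) (use assms a in \<open>auto simp: continuous_on_def\<close>)
  then have t: "((\<lambda>r. B * N1 (\<lambda>z. g r z - g a z)) \<longlongrightarrow> 0) (at a within S)"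
    by (simp add: N1_def)
  have "((\<lambda>r. Q (g r) x - Q (g a) x) \<longlongrightarrow> 0) (at a within S)"
    by (rule Lim_null_comparison[OF _ t]) (auto intro!: always_eventually simp: Qlip)
  then show "((\<lambda>r. Q (g r) x) \<longlongrightarrow> Q (g a) x) (at a within S)"
    by (rule LIM_zero_cancel)
qed

fun pic :: "('x \<Rightarrow> real) \<Rightarrow> nat \<Rightarrow> real \<Rightarrow> 'x \<Rightarrow> real" where
  "pic f 0 = (\<lambda>s. f)"
| "pic f (Suc k) = (\<lambda>s x. f x + integral {0..s} (\<lambda>r. Q (pic f k r) x))"

declare pic.simps(2)[simp del]

lemma pic_Suc: "pic f (Suc k) s x = f x + integral {0..s} (\<lambda>r. Q (pic f k r) x)"
  by (simp add: pic.simps(2))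

lemma cont_pic: "continuous_on {0..} (\<lambda>s. pic f k s x)"
proof (induction k arbitrary: x)
  case 0
  then show ?case by simp
next
  case (Suc k)
  have c: "continuous_on {0..} (\<lambda>r. Q (pic f k r) x)" by (rule Qcont) (rule Suc.IH)
  have "continuous_on {0..} (\<lambda>s. integral {0..s} (\<lambda>r. Q (pic f k r) x))"
    by (rule DERIV_continuous_on[OF ftc0[OF c]]) simp
  then show ?case by (auto intro!: continuous_intros simp: pic_Suc)
qed

lemma Qcont_pic: "continuous_on {0..} (\<lambda>r. Q (pic f k r) x)"
  by (rule Qcont) (rule cont_pic)

definition L :: real where "L = real CARD('x) * B"

lemma L_nonneg: "L \<ge> 0" unfolding L_def using B_nonneg by simp

lemma dbound:
  assumes "s \<ge> 0"
  shows "N1 (\<lambda>x. pic f (Suc k) s x - pic f k s x) \<le> N1 (Q f) * L^k * s^(k+1) / fact (k+1)"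
  using assms
proof (induction k arbitrary: s)
  case 0
  have "pic f (Suc 0) s x - pic f 0 s x = s * Q f x" for x
    using 0 by (simp add: pic_Suc)
  then show ?case using 0 by (simp add: N1_def abs_mult flip: sum_distrib_left)
next
  case (Suc k)
  define C where "C = N1 (Q f)"
  define e where "e r = N1 (\<lambda>x. pic f (Suc k) r x - pic f k r x)" for r
  have ce: "continuous_on {0..s} e"
    unfolding e_def N1_def
    by (intro continuous_intros continuous_on_subset[OF cont_pic]) auto
  have cq: "continuous_on {0..s} (\<lambda>r. Q (pic f k r) x)" for k x
    by (rule continuous_on_subset[OF Qcont_pic]) auto
  have ib: "((\<lambda>r. (B * C * L^k / fact (k+1)) * r^(k+1)) has_integral
             ((B * C * L^k / fact (k+1)) * s^(Suc (k+1)) / Suc (k+1))) {0..s}"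
    by (rule poly_int) (use Suc.prems in auto)
  have pt: "\<bar>pic f (Suc (Suc k)) s x - pic f (Suc k) s x\<bar> \<le> B * C * L^k * s^(k+2) / fact (k+2)" for x
  proof -
    have "pic f (Suc (Suc k)) s x - pic f (Suc k) s x
          = integral {0..s} (\<lambda>r. Q (pic f (Suc k) r) x - Q (pic f k r) x)"
      unfolding pic_Suc[of f "Suc k" s x] pic_Suc[of f k s x]
      by (simp add: integral_diff integrable_continuous_interval cq)
    also have "\<bar>\<dots>\<bar> \<le> integral {0..s} (\<lambda>r. B * e r)"
      unfolding real_norm_def[symmetric]
    proof (rule integral_norm_bound_integral)
      show "(\<lambda>r. Q (pic f (Suc k) r) x - Q (pic f k r) x) integrable_on {0..s}"
        by (auto intro!: integrable_continuous_interval continuous_intros cq)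
      show "(\<lambda>r. B * e r) integrable_on {0..s}"
        by (auto intro!: integrable_continuous_interval continuous_intros ce)
      fix r show "norm (Q (pic f (Suc k) r) x - Q (pic f k r) x) \<le> B * e r"
        by (simp add: e_def Qlip)
    qed
    also have "\<dots> \<le> integral {0..s} (\<lambda>r. (B * C * L^k / fact (k+1)) * r^(k+1))"
    proof (rule integral_le)
      show "(\<lambda>r. B * e r) integrable_on {0..s}"
        by (auto intro!: integrable_continuous_interval continuous_intros ce)
      show "(\<lambda>r. (B * C * L^k / fact (k+1)) * r^(k+1)) integrable_on {0..s}"
        using ib by blast
      fix r assume r: "r \<in> {0..s}"
      have "e r \<le> C * L^k * r^(k+1) / fact (k+1)"
        using Suc.IH[of r] r by (simp add: e_def C_def)
      then have "B * e r \<le> B * (C * L^k * r^(k+1) / fact (k+1))"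
        using B_nonneg by (rule mult_left_mono)
      then show "B * e r \<le> (B * C * L^k / fact (k+1)) * r^(k+1)" by simp
    qed
    also have "\<dots> = (B * C * L^k / fact (k+1)) * s^(Suc (k+1)) / Suc (k+1)"
      using ib by (rule integral_unique)
    also have "\<dots> = B * C * L^k * s^(k+2) / fact (k+2)"
      by (simp add: fact_Suc field_simps)
    finally show ?thesis .
  qed
  have "N1 (\<lambda>x. pic f (Suc (Suc k)) s x - pic f (Suc k) s x) \<le> (\<Sum>x\<in>(UNIV::'x set). B * C * L^k * s^(k+2) / fact (k+2))"
    unfolding N1_def using pt by (intro sum_mono) auto
  also have "\<dots> = C * L^(Suc k) * s^(Suc k + 1) / fact (Suc k + 1)"
    by (simp add: L_def algebra_simps)
  finally show ?case by (simp add: C_def)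
qed

end

context lrate begin

definition G :: "('x \<Rightarrow> real) \<Rightarrow> real \<Rightarrow> 'x \<Rightarrow> real" where
  "G f s x = f x + (\<Sum>i. pic f (Suc i) s x - pic f i s x)"

lemma unif:
  assumes T: "T \<ge> 0"
  shows "uniform_limit {0..T} (\<lambda>k s. pic f k s x) (\<lambda>s. G f s x) sequentially"
proof -
  define C where "C = N1 (Q f)"
  have C0: "C \<ge> 0" unfolding C_def N1_def by (simp add: sum_nonneg)
  define M where "M i = C * L^i * T^(i+1) / fact (i+1)" for i
  have bd: "norm (pic f (Suc i) s x - pic f i s x) \<le> M i" if s: "s \<in> {0..T}" for i s
  proof -
    have "norm (pic f (Suc i) s x - pic f i s x) \<le> N1 (\<lambda>x. pic f (Suc i) s x - pic f i s x)"
      unfolding N1_def real_norm_def by (rule member_le_sum) auto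
    also have "\<dots> \<le> C * L^i * s^(i+1) / fact (i+1)"
      using dbound[of s f i] s by (simp add: C_def)
    also have "\<dots> \<le> M i" unfolding M_def
      using s C0 L_nonneg
      by (intro divide_right_mono mult_left_mono power_mono mult_nonneg_nonneg zero_le_power) auto
    finally show ?thesis .
  qed
  have sM: "summable M"
  proof (rule summable_comparison_test')
    show "summable (\<lambda>n. C * T * (inverse (fact n) * (L * T)^n))"
      by (intro summable_mult summable_exp)
    fix n :: nat
    have "fact n \<le> (fact (n+1) :: real)" by (rule fact_mono) simp
    then have "C * L^n * T^(n+1) / fact (n+1) \<le> C * L^n * T^(n+1) / fact n"
      using C0 L_nonneg T by (intro divide_left_mono mult_nonneg_nonneg zero_le_power) auto
    also have "\<dots> = C * T * (inverse (fact n) * (L * T)^n)"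
      by (simp add: power_mult_distrib field_simps)
    finally show "norm (M n) \<le> C * T * (inverse (fact n) * (L * T)^n)"
      unfolding M_def using C0 L_nonneg T by simp
  qed
  have u: "uniform_limit {0..T} (\<lambda>n s. \<Sum>i<n. pic f (Suc i) s x - pic f i s x)
            (\<lambda>s. \<Sum>i. pic f (Suc i) s x - pic f i s x) sequentially"
    by (rule Weierstrass_m_test[OF bd sM])
  have "uniform_limit {0..T} (\<lambda>n s. f x + (\<Sum>i<n. pic f (Suc i) s x - pic f i s x))
            (\<lambda>s. f x + (\<Sum>i. pic f (Suc i) s x - pic f i s x)) sequentially"
    by (intro uniform_limit_intros u)
  moreover have "f x + (\<Sum>i<n. pic f (Suc i) s x - pic f i s x) = pic f n s x" for n s
    by (subst sum_lessThan_telescope[where f="\<lambda>i. pic f i s x"]) simp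
  ultimately show ?thesis by (simp add: G_def)
qed

lemma contG_T: "T \<ge> 0 \<Longrightarrow> continuous_on {0..T} (\<lambda>s. G f s y)"
  by (rule uniform_limit_theorem[OF _ unif]) 
     (auto intro!: always_eventually continuous_on_subset[OF cont_pic])

lemma contG: "continuous_on {0..} (\<lambda>s. G f s y)"
  by (rule cont_within_transfer) (rule contG_T)

lemma QcontG: "continuous_on {0..} (\<lambda>r. Q (G f r) x)"
  by (rule Qcont) (rule contG)

lemma unifQ:
  assumes T: "T \<ge> 0"
  shows "uniform_limit {0..T} (\<lambda>k r. Q (pic f k r) x) (\<lambda>r. Q (G f r) x) sequentially"
proof (rule uniform_limitI)
  fix e :: real assume e: "e > 0"
  define n where "n = real CARD('x)"
  define \<delta> where "\<delta> = e / (B * n + 1)"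
  have Bn: "B * n \<ge> 0" using B_nonneg by (simp add: n_def)
  have d: "\<delta> > 0" using e Bn by (simp add: \<delta>_def)
  have "\<forall>\<^sub>F k in sequentially. \<forall>y. \<forall>r\<in>{0..T}. dist (pic f k r y) (G f r y) < \<delta>"
    by (rule eventually_all_finite) (rule uniform_limitD[OF unif[OF T] d])
  then show "\<forall>\<^sub>F k in sequentially. \<forall>r\<in>{0..T}. dist (Q (pic f k r) x) (Q (G f r) x) < e"
  proof eventually_elim
    case (elim k)
    show ?case
    proof
      fix r assume r: "r \<in> {0..T}"
      have "dist (Q (pic f k r) x) (Q (G f r) x) \<le> B * N1 (\<lambda>z. pic f k r z - G f r z)"
        unfolding dist_real_def by (rule Qlip)
      also have "N1 (\<lambda>z. pic f k r z - G f r z) \<le> (\<Sum>z\<in>(UNIV::'x set). \<delta>)"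
        unfolding N1_def using elim r by (intro sum_mono) (auto simp: dist_real_def less_imp_le)
      then have "B * N1 (\<lambda>z. pic f k r z - G f r z) \<le> B * (n * \<delta>)"
        using B_nonneg by (intro mult_left_mono) (auto simp: n_def)
      also have "B * (n * \<delta>) < e"
      proof -
        have "B * (n * \<delta>) = e * (B * n / (B * n + 1))" using Bn by (simp add: \<delta>_def field_simps)
        also have "\<dots> < e * 1" using e Bn by (intro mult_strict_left_mono) auto
        finally show ?thesis by simp
      qed
      finally show "dist (Q (pic f k r) x) (Q (G f r) x) < e" .
    qed
  qed
qed

lemma Geq:
  assumes s: "s \<ge> 0"
  shows "G f s x = f x + integral {0..s} (\<lambda>r. Q (G f r) x)"
proof -
  obtain I J where I: "\<And>k. ((\<lambda>r. Q (pic f k r) x) has_integral I k) {0..s}"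
    and J: "((\<lambda>r. Q (G f r) x) has_integral J) {0..s}" and IJ: "I \<longlonglongrightarrow> J"
    by (rule uniform_limit_integral[OF unifQ[OF s]])
       (auto intro: continuous_on_subset[OF Qcont_pic])
  have "(\<lambda>k. pic f (Suc k) s x) = (\<lambda>k. f x + I k)"
    using I by (auto simp: pic_Suc integral_unique)
  moreover have "(\<lambda>k. pic f (Suc k) s x) \<longlonglongrightarrow> G f s x"
    by (rule LIMSEQ_Suc, rule tendsto_uniform_limitI[OF unif[OF s]]) (use s in auto)
  ultimately have "(\<lambda>k. f x + I k) \<longlonglongrightarrow> G f s x" by simp
  moreover have "(\<lambda>k. f x + I k) \<longlonglongrightarrow> f x + J" by (intro tendsto_intros IJ)
  ultimately have "G f s x = f x + J" by (rule LIMSEQ_unique)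
  then show ?thesis using J by (simp add: integral_unique)
qed

lemma Gsol: "is_lower_sol Q f (G f)"
  unfolding is_lower_sol_def
proof (intro conjI allI impI)
  show "G f 0 = f" by (auto simp: fun_eq_iff Geq)
  fix t :: real and x assume t: "t \<ge> 0"
  have "((\<lambda>s. f x + integral {0..s} (\<lambda>r. Q (G f r) x)) has_real_derivative 0 + Q (G f t) x) (at t within {0..})"
    by (intro derivative_intros ftc0 QcontG t)
  then have "((\<lambda>s. f x + integral {0..s} (\<lambda>r. Q (G f r) x)) has_real_derivative Q (G f t) x) (at t within {0..})"
    by simp
  then show "((\<lambda>s. G f s x) has_real_derivative Q (G f t) x) (at t within {0..})"
    by (rule has_field_derivative_transform_within[where d=1]) (use t in \<open>auto simp: Geq\<close>)
qed

end

context lrate begin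

lemma Tsol: "is_lower_sol Q f (\<lambda>s. lower_T Q s f)"
proof -
  have "is_lower_sol Q f (SOME g. is_lower_sol Q f g)" by (rule someI[of _ "G f"]) (rule Gsol)
  moreover have "(\<lambda>s. lower_T Q s f) = (SOME g. is_lower_sol Q f g)"
    by (simp add: lower_T_def[abs_def])
  ultimately show ?thesis by simp
qed

lemma T0: "lower_T Q 0 f = f"
  using Tsol[of f] unfolding is_lower_sol_def by simp

lemma shift:
  assumes a: "a \<ge> 0"
  shows "is_lower_sol Q (lower_T Q a f) (\<lambda>s. lower_T Q (a + s) f)"
  unfolding is_lower_sol_def
proof (intro conjI allI impI)
  show "lower_T Q (a + 0) f = lower_T Q a f" by simp
  fix t :: real and x assume t: "t \<ge> 0"
  have d: "((\<lambda>s. lower_T Q s f x) has_real_derivative Q (lower_T Q (a + t) f) x) (at (a + t) within {0..})"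
    using Tsol[of f] a t unfolding is_lower_sol_def by auto
  have d': "((\<lambda>s. lower_T Q s f x) has_real_derivative Q (lower_T Q (a + t) f) x) (at ((\<lambda>s. a + s) t) within ((\<lambda>s. a + s) ` {0..}))"
    by (rule has_field_derivative_subset[OF d]) (use a in auto)
  have e: "((\<lambda>s. a + s) has_real_derivative 1) (at t within {0..})"
    by (rule derivative_eq_intros refl | simp)+
  from DERIV_image_chain[OF d' e]
  show "((\<lambda>s. lower_T Q (a + s) f x) has_real_derivative Q (lower_T Q (a + t) f) x) (at t within {0..})"
    by (simp add: o_def)
qed

lemma semigroup:
  assumes "a \<ge> 0" "b \<ge> 0"
  shows "lower_T Q (a + b) f = lower_T Q b (lower_T Q a f)"
  using uniq[OF shift[OF assms(1)] Tsol assms(2)] by simp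

lemma Tconst:
  assumes "s \<ge> 0"
  shows "lower_T Q s (\<lambda>_. c) = (\<lambda>_. c)"
proof -
  have "is_lower_sol Q (\<lambda>_. c) (\<lambda>_ _. c)"
    unfolding is_lower_sol_def by (auto simp: Qconst)
  from uniq[OF Tsol this assms] show ?thesis .
qed

lemma Tpow:
  assumes "t \<ge> 0"
  shows "(lower_T Q t ^^ n) f = lower_T Q (real n * t) f"
proof (induction n)
  case 0
  then show ?case by (simp add: T0)
next
  case (Suc n)
  have "(lower_T Q t ^^ Suc n) f = lower_T Q t (lower_T Q (real n * t) f)"
    using Suc by simp
  also have "\<dots> = lower_T Q (real n * t + t) f"
    using assms by (intro semigroup[symmetric]) auto
  finally show ?case by (simp add: algebra_simps)
qed

lemma main:
  assumes t: "t > 0"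
  shows "ergodic_rate Q \<longleftrightarrow> ergodic_op (lower_T Q t)"
proof
  assume erg: "ergodic_rate Q"
  show "ergodic_op (lower_T Q t)"
    unfolding ergodic_op_def
  proof
    fix f
    obtain c where c: "((\<lambda>s. lower_T Q s f) \<longlongrightarrow> (\<lambda>_. c)) at_top"
      using erg unfolding ergodic_rate_def by blast
    have lim: "filterlim (\<lambda>n. real n * t) at_top sequentially"
      using filterlim_tendsto_pos_mult_at_top[OF tendsto_const[of t] t filterlim_real_sequentially]
      by (simp add: mult.commute)
    have "((\<lambda>n. lower_T Q (real n * t) f) \<longlongrightarrow> (\<lambda>_. c)) sequentially"
      by (rule filterlim_compose[OF c lim])
    then show "\<exists>c. ((\<lambda>n. (lower_T Q t ^^ n) f) \<longlongrightarrow> (\<lambda>_. c)) sequentially"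
      using t by (auto simp: Tpow)
  qed
next
  assume erg: "ergodic_op (lower_T Q t)"
  show "ergodic_rate Q"
    unfolding ergodic_rate_def
  proof
    fix f
    obtain c where c: "((\<lambda>n. (lower_T Q t ^^ n) f) \<longlongrightarrow> (\<lambda>_. c)) sequentially"
      using erg unfolding ergodic_op_def by blast
    then have cy: "((\<lambda>n. lower_T Q (real n * t) f y) \<longlongrightarrow> c) sequentially" for y
      using t by (auto simp: Tpow tendsto_fun_iff)
    define V where "V n = (\<Sum>y\<in>UNIV. (lower_T Q (real n * t) f y - c)^2)" for n
    have V0: "V \<longlonglongrightarrow> 0"
    proof -
      have "V \<longlonglongrightarrow> (\<Sum>y\<in>(UNIV::'x set). (c - c)^2)"
        unfolding V_def by (intro tendsto_intros cy)
      then show ?thesis by simp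
    qed
    define m where "m s = nat \<lfloor>s / t\<rfloor>" for s
    have mlim: "filterlim m sequentially at_top"
    proof -
      have "filterlim (\<lambda>s. inverse t * s) at_top at_top"
        by (rule filterlim_tendsto_pos_mult_at_top[OF tendsto_const]) (use t in \<open>auto intro: filterlim_ident\<close>)
      then have "filterlim (\<lambda>s. s / t) at_top at_top" by (simp add: field_simps)
      from filterlim_compose[OF filterlim_nat_sequentially filterlim_compose[OF filterlim_floor_sequentially this]]
      show ?thesis by (simp add: m_def[abs_def] o_def)
    qed
    have W0: "((\<lambda>s. sqrt (exp (K * t) * V (m s))) \<longlongrightarrow> 0) at_top"
    proof -
      have "((\<lambda>s. V (m s)) \<longlongrightarrow> 0) at_top" by (rule filterlim_compose[OF V0 mlim])
      then have "((\<lambda>s. sqrt (exp (K * t) * V (m s))) \<longlongrightarrow> sqrt (exp (K * t) * 0)) at_top"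
        by (intro tendsto_intros)
      then show ?thesis by simp
    qed
    have "((\<lambda>s. lower_T Q s f x) \<longlongrightarrow> c) at_top" for x
    proof -
      have "((\<lambda>s. lower_T Q s f x - c) \<longlongrightarrow> 0) at_top"
      proof (rule Lim_null_comparison[OF _ W0])
        show "\<forall>\<^sub>F s in at_top. norm (lower_T Q s f x - c) \<le> sqrt (exp (K * t) * V (m s))"
        proof (rule eventually_at_top_linorderI[of 0])
          fix s :: real assume s: "s \<ge> 0"
          define n where "n = m s"
          define r where "r = s - real n * t"
          have "real n = of_int \<lfloor>s / t\<rfloor>" unfolding n_def m_def using s t by simp
          moreover have "of_int \<lfloor>s / t\<rfloor> \<le> s / t" "s / t < of_int \<lfloor>s / t\<rfloor> + 1"
            by linarith+
          ultimately have "real n \<le> s / t" "s / t < real n + 1" by auto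
          then have nr: "real n * t \<le> s" "s < real n * t + t"
            using t by (auto simp: pos_le_divide_eq pos_divide_less_eq algebra_simps)
          then have r: "0 \<le> r" "r \<le> t" unfolding r_def by auto
          have "lower_T Q s f = lower_T Q r (lower_T Q (real n * t) f)"
            using semigroup[of "real n * t" r f] r t unfolding r_def by simp
          moreover have "c = lower_T Q r (\<lambda>_. c) x" using Tconst[OF r(1)] by simp
          ultimately have "\<bar>lower_T Q s f x - c\<bar> \<le> sqrt (exp (K * r) * (\<Sum>y\<in>UNIV. (lower_T Q (real n * t) f y - c)^2))"
            using gron_pt[OF Tsol[of "lower_T Q (real n * t) f"] Tsol[of "\<lambda>_. c"] r(1), where x=x] by simp
          also have "\<dots> \<le> sqrt (exp (K * t) * V (m s))"
            unfolding V_def n_def[symmetric]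
            using r K_nonneg by (intro real_sqrt_le_mono mult_right_mono sum_nonneg) (auto intro: mult_left_mono)
          finally show "norm (lower_T Q s f x - c) \<le> sqrt (exp (K * t) * V (m s))" by simp
        qed
      qed
      then show ?thesis by (rule LIM_zero_cancel)
    qed
    then show "\<exists>c. ((\<lambda>s. lower_T Q s f) \<longlongrightarrow> (\<lambda>_. c)) at_top"
      by (auto simp: tendsto_fun_iff)
  qed
qed

end

theorem proposition9:
  fixes Q :: "('x::finite \<Rightarrow> real) \<Rightarrow> ('x \<Rightarrow> real)" and t :: real
  assumes "lower_rate_op Q" and "t > 0"
  shows "ergodic_rate Q \<longleftrightarrow> ergodic_op (lower_T Q t)"
proof -
  interpret lrate Q using assms(1) by unfold_locales
  show ?thesis using main[OF assms(2)] .
qed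

end
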